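(* Let $\{\varphi_n\},\{\psi_n\}$ be biorthogonal sequences in a Hilbert space $\mathcal H$ forming a $(\mathcal D,\mathcal E)$-quasi basis for dense subspaces $\mathcal D,\mathcal E$ with $D_\psi\subseteq\mathcal D\subseteq D(\varphi)$, $D_\varphi\subseteq\mathcal E\subseteq D(\psi)$. Let $\{f_n\}$ be an ONB such that $\overline{T_{f,\varphi}|_{\mathcal D}}$ is positive self-adjoint and $(\{f_n\},\overline{T_{f,\varphi}|_{\mathcal D}})$ is a constructing pair for $\{\varphi_n\}$, and let $\{g_n\}$ be an ONB such that $\overline{T_{g,\psi}|_{\mathcal E}}$ is positive self-adjoint and $(\{g_n\},\overline{T_{g,\psi}|_{\mathcal E}})$ is a constructing pair for $\{\psi_n\}$. Let $\alpha=\{\alpha_n\}$ be a real sequence with $0\le\alpha_0<\alpha_n<\alpha_{n+1}$ and $\alpha_{n+1}\le\alpha_n+r$ for all $n\ge1$, for some $r>0$. Then: (1) If $D^\infty(H_f^\alpha)\subseteq\mathcal D$ and $T_{f,\varphi}D^\infty(H_f^\alpha)$ is dense in $\mathcal H$, then, with $T_\varphi^0:=\overline{T_{f,\varphi}|_{D^\infty(H_f^\alpha)}}$, the pair $(\{f_n\},T_\varphi^0)$ is a constructing pair for $\{\varphi_n\}$, and the operators $H_\varphi^0:=T_\varphi^0H_f^\alpha(T_\varphi^0)^{-1}$, $A_\varphi^0:=T_\varphi^0A_f^\alpha(T_\varphi^0)^{-1}$, $B_\varphi^0:=T_\varphi^0B_f^\alpha(T_\varphi^0)^{-1}$ all belong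 to $\mathcal L(T_\varphi^0D^\infty(H_f^\alpha))$. (2) If $D^\infty(H_g^\alpha)\subseteq\mathcal E$ and $T_{g,\psi}D^\infty(H_g^\alpha)$ is dense in $\mathcal H$, then, with $T_\psi^0:=\overline{T_{g,\psi}|_{D^\infty(H_g^\alpha)}}$, the pair $(\{g_n\},T_\psi^0)$ is a constructing pair for $\{\psi_n\}$, and $H_\psi^0:=T_\psi^0H_g^\alpha(T_\psi^0)^{-1}$, $A_\psi^0:=T_\psi^0A_g^\alpha(T_\psi^0)^{-1}$, $B_\psi^0:=T_\psi^0B_g^\alpha(T_\psi^0)^{-1}$ all belong to $\mathcal L(T_\psi^0D^\infty(H_g^\alpha))$.
   Context: Inner product linear in the first argument. Biorthogonal: $\langle\varphi_n,\psi_m\rangle=\delta_{nm}$. $D_\varphi,D_\psi$ are the linear spans; $D(\varphi)=\{x:\sum_n|\langle x,\varphi_n\rangle|^2<\infty\}$, similarly $D(\psi)$. The pair is a $(\mathcal D,\mathcal E)$-quasi basis if $\sum_k\langle x,\varphi_k\rangle\langle\psi_k,y\rangle=\langle x,y\rangle$ for all $x\in\mathcal D$, $y\in\mathcal E$. For an ONB $\{f_n\}$, $T_{f,\varphi}$ has domain $D(\varphi)$ and $T_{f,\varphi}x=\sum_n\langle x,\varphi_n\rangle f_n$ (similarly $T_{g,\psi}$ on $D(\psi)$); bar is closure, $|$ restriction. A constructing pair for $\{\chi_n\}$ is $(\{f_n\},S)$ with $\{f_n\}$ an ONB, $S$ densely defined closed with densely defined inverse, $f_n\in D(S)\cap D((S^{-1})^*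 )$, $Sf_n=\chi_n$. For an ONB $\{f_n\}$: $H_f^\alpha x=\sum_n\alpha_n\langle x,f_n\rangle f_n$, $A_f^\alpha x=\sum_n\alpha_{n+1}\langle x,f_{n+1}\rangle f_n$, $B_f^\alpha x=\sum_n\alpha_{n+1}\langle x,f_n\rangle f_{n+1}$, each on the maximal domain of $x$ for which the coefficient sequence is square summable. $D^\infty(H)=\bigcap_{n\ge1}D(H^n)$. For a subspace $\mathcal D_0$, $\mathcal L(\mathcal D_0)$ is the algebra of linear operators from $\mathcal D_0$ into $\mathcal D_0$; an operator "belongs to" $\mathcal L(\mathcal D_0)$ if $\mathcal D_0$ is in its domain and is mapped into itself. *)

theory Defs
  imports "HOL-Analysis.Analysis"
begin

class complex_vector = real_vector +
  fixes scaleC :: "complex \<Rightarrow> 'a \<Rightarrow> 'a" (infixr \<open>*\<^sub>C\<close> 75)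
  assumes scaleC_add_right: "a *\<^sub>C (x + y) = a *\<^sub>C x + a *\<^sub>C y"
    and scaleC_add_left: "(a + b) *\<^sub>C x = a *\<^sub>C x + b *\<^sub>C x"
    and scaleC_scaleC: "a *\<^sub>C (b *\<^sub>C x) = (a * b) *\<^sub>C x"
    and scaleC_one: "1 *\<^sub>C x = x"
    and scaleR_scaleC: "scaleR r x = complex_of_real r *\<^sub>C x"

class complex_inner = complex_vector + real_normed_vector +
  fixes cinner :: "'a \<Rightarrow> 'a \<Rightarrow> complex"
  assumes cinner_commute: "cinner x y = cnj (cinner y x)"
    and cinner_add_left: "cinner (x + y) z = cinner x z + cinner y z"
    and cinner_scaleC_left: "cinner (a *\<^sub>C x) y = a * cinner x y"
    and cinner_norm: "cinner x x = complex_of_real ((norm x)\<^sup>2)"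

class chilbert_space = complex_inner + complete_space

definition csubspace :: "'a::complex_vector set \<Rightarrow> bool" where
  "csubspace S \<longleftrightarrow> 0 \<in> S \<and> (\<forall>x\<in>S. \<forall>y\<in>S. x + y \<in> S) \<and> (\<forall>c. \<forall>x\<in>S. c *\<^sub>C x \<in> S)"

definition cspan :: "'a::complex_vector set \<Rightarrow> 'a set" where
  "cspan S = {x. \<exists>F c. finite F \<and> F \<subseteq> S \<and> x = (\<Sum>v\<in>F. c v *\<^sub>C v)}"

definition dense_set :: "'a::topological_space set \<Rightarrow> bool" where
  "dense_set S \<longleftrightarrow> closure S = UNIV"

definition is_onb :: "(nat \<Rightarrow> 'a::complex_inner) \<Rightarrow> bool" where
  "is_onb f \<longleftrightarrow> (\<forall>n m. cinner (f n) (f m) = (if n = m then 1 else 0))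
                  \<and> dense_set (cspan (range f))"

definition biorthogonal :: "(nat \<Rightarrow> 'a::complex_inner) \<Rightarrow> (nat \<Rightarrow> 'a) \<Rightarrow> bool" where
  "biorthogonal \<phi> \<psi> \<longleftrightarrow> (\<forall>n m. cinner (\<phi> n) (\<psi> m) = (if n = m then 1 else 0))"

definition seq_dom :: "(nat \<Rightarrow> 'a::complex_inner) \<Rightarrow> 'a set" where
  "seq_dom \<phi> = {x. summable (\<lambda>n. (cmod (cinner x (\<phi> n)))\<^sup>2)}"

definition quasi_basis ::
  "(nat \<Rightarrow> 'a::complex_inner) \<Rightarrow> (nat \<Rightarrow> 'a) \<Rightarrow> 'a set \<Rightarrow> 'a set \<Rightarrow> bool" where
  "quasi_basis \<phi> \<psi> D E \<longleftrightarrow>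
     (\<forall>x\<in>D. \<forall>y\<in>E. (\<lambda>k. cinner x (\<phi> k) * cinner (\<psi> k) y) sums cinner x y)"

section \<open>(Unbounded) linear operators, represented by their graphs\<close>

type_synonym 'a lop = "('a \<times> 'a) set"

definition lin_op :: "'a::complex_vector lop \<Rightarrow> bool" where
  "lin_op T \<longleftrightarrow> (\<forall>x y z. (x, y) \<in> T \<longrightarrow> (x, z) \<in> T \<longrightarrow> y = z)
     \<and> (0, 0) \<in> T
     \<and> (\<forall>x y u v. (x, y) \<in> T \<longrightarrow> (u, v) \<in> T \<longrightarrow> (x + u, y + v) \<in> T)
     \<and> (\<forall>c x y. (x, y) \<in> T \<longrightarrow> (c *\<^sub>C x, c *\<^sub>C y) \<in> T)"

definition densely_defined :: "'a::{complex_vector,topological_space} lop \<Rightarrow> bool" where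
  "densely_defined T \<longleftrightarrow> dense_set (Domain T)"

text \<open>Closed operator: its graph is closed in H x H. The closure of an operator is the
  closure of its graph (used only for closable operators).\<close>
definition closed_op :: "'a::{complex_vector,topological_space} lop \<Rightarrow> bool" where
  "closed_op T \<longleftrightarrow> lin_op T \<and> closed T"

definition op_closure :: "'a::topological_space lop \<Rightarrow> 'a lop" where
  "op_closure T = closure T"

definition op_restrict :: "'a lop \<Rightarrow> 'a set \<Rightarrow> 'a lop" where
  "op_restrict T D = {(x, y). (x, y) \<in> T \<and> x \<in> D}"

definition op_inv :: "'a lop \<Rightarrow> 'a lop" where
  "op_inv T = converse T"

definition adjoint :: "'a::complex_inner lop \<Rightarrow> 'a lop" where
  "adjoint T = {(y, z). \<forall>x w. (x, w) \<in> T \<longrightarrow> cinner w y = cinner x z}"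

definition self_adjoint :: "'a::complex_inner lop \<Rightarrow> bool" where
  "self_adjoint T \<longleftrightarrow> lin_op T \<and> densely_defined T \<and> adjoint T = T"

definition positive_op :: "'a::complex_inner lop \<Rightarrow> bool" where
  "positive_op T \<longleftrightarrow> (\<forall>x y. (x, y) \<in> T \<longrightarrow> (\<exists>t\<ge>0. cinner y x = complex_of_real t))"

text \<open>Composition S T R (apply R first, then T, then S), with natural domain.\<close>
definition op_comp3 :: "'a lop \<Rightarrow> 'a lop \<Rightarrow> 'a lop \<Rightarrow> 'a lop" where
  "op_comp3 S T R = R O T O S"

definition constructing_pair :: "(nat \<Rightarrow> 'a::complex_inner) \<Rightarrow> 'a lop \<Rightarrow> (nat \<Rightarrow> 'a) \<Rightarrow> bool" where
  "constructing_pair f S chi \<longleftrightarrow>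
     is_onb f \<and> densely_defined S \<and> closed_op S
     \<and> lin_op (op_inv S) \<and> densely_defined (op_inv S)
     \<and> (\<forall>n. f n \<in> Domain S \<and> f n \<in> Domain (adjoint (op_inv S)) \<and> (f n, chi n) \<in> S)"

definition ser_op :: "(nat \<Rightarrow> 'a::{complex_vector,topological_space}) \<Rightarrow> ('a \<Rightarrow> nat \<Rightarrow> complex) \<Rightarrow> 'a lop" where
  "ser_op e c = {(x, \<Sum>n. c x n *\<^sub>C e n) | x. summable (\<lambda>n. (cmod (c x n))\<^sup>2)}"

definition T_op :: "(nat \<Rightarrow> 'a::complex_inner) \<Rightarrow> (nat \<Rightarrow> 'a) \<Rightarrow> 'a lop" where
  "T_op f \<phi> = ser_op f (\<lambda>x n. cinner x (\<phi> n))"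

definition H_op :: "(nat \<Rightarrow> real) \<Rightarrow> (nat \<Rightarrow> 'a::complex_inner) \<Rightarrow> 'a lop" where
  "H_op \<alpha> f = ser_op f (\<lambda>x n. complex_of_real (\<alpha> n) * cinner x (f n))"

definition A_op :: "(nat \<Rightarrow> real) \<Rightarrow> (nat \<Rightarrow> 'a::complex_inner) \<Rightarrow> 'a lop" where
  "A_op \<alpha> f = ser_op f (\<lambda>x n. complex_of_real (\<alpha> (Suc n)) * cinner x (f (Suc n)))"

definition B_op :: "(nat \<Rightarrow> real) \<Rightarrow> (nat \<Rightarrow> 'a::complex_inner) \<Rightarrow> 'a lop" where
  "B_op \<alpha> f = ser_op (\<lambda>n. f (Suc n)) (\<lambda>x n. complex_of_real (\<alpha> (Suc n)) * cinner x (f n))"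

definition Dinf :: "'a lop \<Rightarrow> 'a set" where
  "Dinf H = (\<Inter>n\<in>{1..}. Domain (H ^^ n))"

definition in_L :: "'a lop \<Rightarrow> 'a set \<Rightarrow> bool" where
  "in_L T D0 \<longleftrightarrow> D0 \<subseteq> Domain T \<and> T `` D0 \<subseteq> D0"

end

theory Submission imports Defs begin
subclass (in chilbert_space) banach ..

lemma scaleC_zero_right[simp]: "a *\<^sub>C (0::'a::complex_vector) = 0"
  by (metis add_cancel_right_right scaleC_add_right)
lemma scaleC_zero_left[simp]: "(0::complex) *\<^sub>C (x::'a::complex_vector) = 0"
  by (metis add_cancel_right_right add_0 scaleC_add_left)
lemma scaleC_minus_right: "a *\<^sub>C (- x::'a::complex_vector) = - (a *\<^sub>C x)"
  by (metis add.right_inverse eq_neg_iff_add_eq_0 scaleC_add_right scaleC_zero_right)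
lemma scaleC_diff_right: "a *\<^sub>C (x - y::'a::complex_vector) = a *\<^sub>C x - a *\<^sub>C y"
  by (simp only: diff_conv_add_uminus scaleC_add_right scaleC_minus_right)
lemma scaleC_sum_right: "a *\<^sub>C (sum g F::'a::complex_vector) = (\<Sum>i\<in>F. a *\<^sub>C g i)"
  by (induction F rule: infinite_finite_induct) (auto simp: scaleC_add_right)

lemma cinner_zero_left[simp]: "cinner 0 (y::'a::complex_inner) = 0"
  by (metis add_cancel_right_right add_0 cinner_add_left)
lemma cinner_zero_right[simp]: "cinner (y::'a::complex_inner) 0 = 0"
  by (metis cinner_commute cinner_zero_left complex_cnj_zero)
lemma cinner_add_right: "cinner (x::'a::complex_inner) (y + z) = cinner x y + cinner x z"
  by (metis cinner_add_left cinner_commute complex_cnj_add)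
lemma cinner_scaleC_right: "cinner (x::'a::complex_inner) (a *\<^sub>C y) = cnj a * cinner x y"
  by (metis cinner_commute cinner_scaleC_left complex_cnj_mult)
lemma cinner_minus_left: "cinner (- x::'a::complex_inner) y = - cinner x y"
  by (metis add.right_inverse add_eq_0_iff cinner_add_left cinner_zero_left)
lemma cinner_diff_left: "cinner (x - z::'a::complex_inner) y = cinner x y - cinner z y"
  by (simp only: diff_conv_add_uminus cinner_add_left cinner_minus_left)
lemma cinner_diff_right: "cinner (x::'a::complex_inner) (y - z) = cinner x y - cinner x z"
  by (metis cinner_commute cinner_diff_left complex_cnj_diff)
lemma cinner_sum_left: "cinner (sum g F::'a::complex_inner) y = (\<Sum>i\<in>F. cinner (g i) y)"
  by (induction F rule: infinite_finite_induct) (auto simp: cinner_add_left)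
lemma cinner_sum_right: "cinner (y::'a::complex_inner) (sum g F) = (\<Sum>i\<in>F. cinner y (g i))"
  by (induction F rule: infinite_finite_induct) (auto simp: cinner_add_right)

lemma norm_sq_cinner: "(norm (x::'a::complex_inner))\<^sup>2 = Re (cinner x x)"
  by (simp add: cinner_norm)

lemma norm_scaleC: "norm (a *\<^sub>C (x::'a::complex_inner)) = cmod a * norm x"
proof -
  have "cinner (a *\<^sub>C x) (a *\<^sub>C x) = complex_of_real ((cmod a)\<^sup>2 * (norm x)\<^sup>2)"
  proof -
    have "cinner (a *\<^sub>C x) (a *\<^sub>C x) = (a * cnj a) * cinner x x"
      by (simp add: cinner_scaleC_left cinner_scaleC_right mult.assoc)
    also have "\<dots> = complex_of_real ((cmod a)\<^sup>2) * complex_of_real ((norm x)\<^sup>2)"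
      by (simp only: complex_norm_square cinner_norm)
    finally show ?thesis by simp
  qed
  then have "(norm (a *\<^sub>C x))\<^sup>2 = (cmod a)\<^sup>2 * (norm x)\<^sup>2"
    by (metis cinner_norm of_real_eq_iff)
  then have "(norm (a *\<^sub>C x))\<^sup>2 = (cmod a * norm x)\<^sup>2"
    by (simp add: power_mult_distrib)
  then show ?thesis by (simp add: power2_eq_iff_nonneg)
qed

lemma scaleC_real: "complex_of_real r *\<^sub>C x = r *\<^sub>R (x::'a::complex_vector)"
  by (simp add: scaleR_scaleC)

lemma bounded_linear_scaleC: "bounded_linear (\<lambda>x::'a::complex_inner. a *\<^sub>C x)"
  for a :: complex
proof (rule bounded_linear_intro[where K="cmod a"])
  show "a *\<^sub>C (x + y) = a *\<^sub>C x + a *\<^sub>C y" for x y :: 'a by (rule scaleC_add_right)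
  show "a *\<^sub>C (r *\<^sub>R x) = r *\<^sub>R (a *\<^sub>C x)" for r and x :: 'a
    by (simp add: scaleR_scaleC scaleC_scaleC mult.commute)
  show "norm (a *\<^sub>C x) \<le> norm x * cmod a" for x :: 'a by (simp add: norm_scaleC mult.commute)
qed

lemma cauchy_schwarz: "cmod (cinner (x::'a::complex_inner) v) \<le> norm x * norm v"
proof (cases "v = 0")
  case True then show ?thesis by simp
next
  case False
  define t where "t = cinner x v / cinner v v"
  define w where "w = x - t *\<^sub>C v"
  have vv: "cinner v v = complex_of_real ((norm v)\<^sup>2)" by (rule cinner_norm)
  have nv: "norm v > 0" using False by simp
  have wv: "cinner w v = 0"
    using nv by (simp add: w_def t_def cinner_diff_left cinner_scaleC_left vv)
  have vw: "cinner v w = 0" using wv by (metis cinner_commute complex_cnj_zero)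
  have "cinner x x = cinner w w + t * cnj t * cinner v v"
    unfolding w_def
    apply (simp add: cinner_diff_left cinner_diff_right cinner_scaleC_left cinner_scaleC_right)
    using wv vw unfolding w_def
    apply (simp add: cinner_diff_left cinner_diff_right cinner_scaleC_left cinner_scaleC_right algebra_simps)
    done
  then have "(norm x)\<^sup>2 = (norm w)\<^sup>2 + (cmod t)\<^sup>2 * (norm v)\<^sup>2"
    by (simp add: cinner_norm complex_mult_cnj vv cmod_power2 flip: of_real_mult of_real_add of_real_power)
  then have le: "(cmod t)\<^sup>2 * (norm v)\<^sup>2 \<le> (norm x)\<^sup>2" by simp
  have ct: "cmod (cinner x v) = cmod t * (norm v)\<^sup>2"
    using nv by (simp add: t_def vv norm_divide norm_power)
  have "(cmod (cinner x v))\<^sup>2 = ((cmod t)\<^sup>2 * (norm v)\<^sup>2) * (norm v)\<^sup>2"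
    unfolding ct by (simp add: power_mult_distrib power2_eq_square)
  also have "\<dots> \<le> (norm x)\<^sup>2 * (norm v)\<^sup>2"
    by (rule mult_right_mono[OF le]) simp
  finally have "(cmod (cinner x v))\<^sup>2 \<le> (norm x)\<^sup>2 * (norm v)\<^sup>2" .
  then have "(cmod (cinner x v))\<^sup>2 \<le> (norm x * norm v)\<^sup>2" by (simp add: power_mult_distrib)
  then show ?thesis by (metis power2_le_imp_le norm_ge_zero mult_nonneg_nonneg)
qed

lemma cinner_scaleR_left: "cinner (r *\<^sub>R x) (v::'a::complex_inner) = r *\<^sub>R cinner x v"
proof -
  have "cinner (r *\<^sub>R x) v = cinner (complex_of_real r *\<^sub>C x) v"
    by (subst scaleR_scaleC) (rule refl)
  also have "\<dots> = complex_of_real r * cinner x v" by (rule cinner_scaleC_left)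
  also have "\<dots> = r *\<^sub>R cinner x v" by (rule scaleR_conv_of_real[symmetric])
  finally show ?thesis .
qed


lemma bounded_linear_cinner_left: "bounded_linear (\<lambda>x::'a::complex_inner. cinner x v)"
  for v :: "'a::complex_inner"
proof (rule bounded_linear_intro[where K="norm v"])
  show "cinner (x + y) v = cinner x v + cinner y v" for x y :: 'a by (rule cinner_add_left)
  show "cinner (r *\<^sub>R x) v = r *\<^sub>R cinner x v" for r and x :: 'a by (rule cinner_scaleR_left)
  show "norm (cinner x v) \<le> norm x * norm v" for x :: 'a by (rule cauchy_schwarz)
qed

section \<open>Orthonormal series\<close>

definition orthonormal :: "(nat \<Rightarrow> 'a::complex_inner) \<Rightarrow> bool" where
  "orthonormal e \<longleftrightarrow> (\<forall>n m. cinner (e n) (e m) = (if n = m then 1 else 0))"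

lemma finite_sum_norm:
  assumes e: "orthonormal e" and F: "finite F"
  shows "(norm (\<Sum>n\<in>F. c n *\<^sub>C e n))\<^sup>2 = (\<Sum>n\<in>F. (cmod (c n))\<^sup>2)"
proof -
  have inner: "(\<Sum>n\<in>F. c n * cinner (e n) (e m)) = c m" if "m \<in> F" for m
  proof -
    have "(\<lambda>n. c n * cinner (e n) (e m)) = (\<lambda>n. if m = n then c m else 0)"
      using e by (auto simp: orthonormal_def)
    then have "(\<Sum>n\<in>F. c n * cinner (e n) (e m)) = (\<Sum>n\<in>F. if m = n then c m else 0)"
      by (simp only:)
    also have "\<dots> = c m" using that F by simp
    finally show ?thesis .
  qed
  have "cinner (\<Sum>n\<in>F. c n *\<^sub>C e n) (\<Sum>n\<in>F. c n *\<^sub>C e n)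
        = (\<Sum>m\<in>F. cnj (c m) * (\<Sum>n\<in>F. c n * cinner (e n) (e m)))"
    by (simp only: cinner_sum_left cinner_sum_right cinner_scaleC_left cinner_scaleC_right)
  also have "\<dots> = (\<Sum>n\<in>F. c n * cnj (c n))"
    using inner by (simp add: mult.commute)
  also have "\<dots> = complex_of_real (\<Sum>n\<in>F. (cmod (c n))\<^sup>2)"
    by (simp only: of_real_sum complex_norm_square)
  finally show ?thesis by (metis cinner_norm of_real_eq_iff)
qed

lemma ortho_summable:
  fixes e :: "nat \<Rightarrow> 'a::chilbert_space"
  assumes e: "orthonormal e" and s: "summable (\<lambda>n. (cmod (c n))\<^sup>2)"
  shows "summable (\<lambda>n. c n *\<^sub>C e n)"
  unfolding summable_Cauchy
proof (intro allI impI)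
  fix \<epsilon> :: real assume "\<epsilon> > 0"
  then have "\<epsilon>\<^sup>2 > 0" by simp
  with s obtain N where N: "\<forall>m\<ge>N. \<forall>n. norm (\<Sum>k\<in>{m..<n}. (cmod (c k))\<^sup>2) < \<epsilon>\<^sup>2"
    unfolding summable_Cauchy by blast
  show "\<exists>N. \<forall>m\<ge>N. \<forall>n. norm (\<Sum>k\<in>{m..<n}. c k *\<^sub>C e k) < \<epsilon>"
  proof (intro exI allI impI)
    fix m n assume "m \<ge> N"
    then have "(norm (\<Sum>k\<in>{m..<n}. c k *\<^sub>C e k))\<^sup>2 < \<epsilon>\<^sup>2"
      using N finite_sum_norm[OF e, of "{m..<n}" c] by (simp add: sum_nonneg)
    then show "norm (\<Sum>k\<in>{m..<n}. c k *\<^sub>C e k) < \<epsilon>"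
      by (rule power_less_imp_less_base) (use \<open>\<epsilon> > 0\<close> in simp)
  qed
qed

lemma ortho_cinner_sums:
  fixes e :: "nat \<Rightarrow> 'a::chilbert_space"
  assumes e: "orthonormal e" and s: "summable (\<lambda>n. (cmod (c n))\<^sup>2)"
  shows "(\<lambda>n. c n * cinner (e n) v) sums cinner (\<Sum>n. c n *\<^sub>C e n) v"
proof -
  have "(\<lambda>n. c n *\<^sub>C e n) sums (\<Sum>n. c n *\<^sub>C e n)"
    using ortho_summable[OF e s] by (rule summable_sums)
  from bounded_linear.sums[OF bounded_linear_cinner_left this, of v]
  show ?thesis by (simp add: cinner_scaleC_left)
qed

lemma ortho_coeff:
  fixes e :: "nat \<Rightarrow> 'a::chilbert_space"
  assumes e: "orthonormal e" and s: "summable (\<lambda>n. (cmod (c n))\<^sup>2)"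
  shows "cinner (\<Sum>n. c n *\<^sub>C e n) (e m) = c m"
proof -
  have "(\<lambda>n. c n * cinner (e n) (e m)) = (\<lambda>n. if n = m then c n else 0)"
    using e by (auto simp: orthonormal_def)
  then have "(\<lambda>n. if n = m then c n else 0) sums cinner (\<Sum>n. c n *\<^sub>C e n) (e m)"
    using ortho_cinner_sums[OF e s, of "e m"] by simp
  with sums_single[of m c] show ?thesis using sums_unique2 by blast
qed

lemma ser_op_iff: "(x, w) \<in> ser_op e c \<longleftrightarrow> summable (\<lambda>n. (cmod (c x n))\<^sup>2) \<and> w = (\<Sum>n. c x n *\<^sub>C e n)"
  by (auto simp: ser_op_def)

lemma onb_orthonormal: "is_onb f \<Longrightarrow> orthonormal f"
  by (simp add: is_onb_def orthonormal_def)

lemma orthonormal_Suc: "orthonormal f \<Longrightarrow> orthonormal (\<lambda>n. f (Suc n))"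
  by (simp add: orthonormal_def)


section \<open>The sequence alpha\<close>

definition alpha_ok :: "(nat \<Rightarrow> real) \<Rightarrow> real \<Rightarrow> bool" where
  "alpha_ok \<alpha> r \<longleftrightarrow> r > 0 \<and> 0 \<le> \<alpha> 0 \<and>
     (\<forall>n. n \<ge> 1 \<longrightarrow> \<alpha> 0 < \<alpha> n \<and> \<alpha> n < \<alpha> (Suc n) \<and> \<alpha> (Suc n) \<le> \<alpha> n + r)"

lemma alpha_mono:
  assumes a: "alpha_ok \<alpha> r" shows "\<alpha> n \<le> \<alpha> (Suc n)"
proof -
  have h: "\<forall>n\<ge>1. \<alpha> 0 < \<alpha> n \<and> \<alpha> n < \<alpha> (Suc n) \<and> \<alpha> (Suc n) \<le> \<alpha> n + r"
    using a by (simp add: alpha_ok_def)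
  show ?thesis
  proof (cases n)
    case 0 then show ?thesis using h[rule_format, of 1] by simp
  next
    case (Suc k) then show ?thesis using h[rule_format, of n] by simp
  qed
qed

lemma alpha_nonneg:
  assumes a: "alpha_ok \<alpha> r" shows "0 \<le> \<alpha> n"
proof -
  have h: "\<forall>n\<ge>1. \<alpha> 0 < \<alpha> n \<and> \<alpha> n < \<alpha> (Suc n) \<and> \<alpha> (Suc n) \<le> \<alpha> n + r"
    and z: "0 \<le> \<alpha> 0"
    using a by (simp_all add: alpha_ok_def)
  show ?thesis
  proof (cases n)
    case 0 then show ?thesis using z by simp
  next
    case (Suc k) then show ?thesis using h[rule_format, of n] z by simp
  qed
qed

lemma alpha_ge1:
  assumes a: "alpha_ok \<alpha> r" and n: "n \<ge> 1" shows "\<alpha> 1 \<le> \<alpha> n"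
  using n
proof (induction n)
  case 0 then show ?case by simp
next
  case (Suc n)
  show ?case
  proof (cases "n = 0")
    case True then show ?thesis by simp
  next
    case False
    then have "\<alpha> 1 \<le> \<alpha> n" using Suc by simp
    then show ?thesis using alpha_mono[OF a, of n] by simp
  qed
qed

lemma alpha1_pos:
  assumes a: "alpha_ok \<alpha> r" shows "0 < \<alpha> 1"
proof -
  have h: "\<forall>n\<ge>1. \<alpha> 0 < \<alpha> n \<and> \<alpha> n < \<alpha> (Suc n) \<and> \<alpha> (Suc n) \<le> \<alpha> n + r"
    and z: "0 \<le> \<alpha> 0"
    using a by (simp_all add: alpha_ok_def)
  show ?thesis using h[rule_format, of 1] z by simp
qed

lemma alpha_growth:
  assumes a: "alpha_ok \<alpha> r" and n: "n \<ge> 1"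
  shows "\<alpha> (Suc n) \<le> (1 + r / \<alpha> 1) * \<alpha> n"
proof -
  have p: "0 < \<alpha> 1" using alpha1_pos[OF a] .
  have r: "r > 0" using a by (simp add: alpha_ok_def)
  have "\<alpha> (Suc n) \<le> \<alpha> n + r" using a n by (simp add: alpha_ok_def)
  also have "r = (r / \<alpha> 1) * \<alpha> 1" using p by simp
  also have "\<dots> \<le> (r / \<alpha> 1) * \<alpha> n"
    using alpha_ge1[OF a n] p r by (intro mult_left_mono) auto
  finally show ?thesis by (simp add: algebra_simps)
qed

lemma alpha_growth_pow:
  assumes a: "alpha_ok \<alpha> r" and n: "n \<ge> 1"
  shows "\<alpha> (Suc n) ^ k \<le> (1 + r / \<alpha> 1) ^ k * \<alpha> n ^ k"
  unfolding power_mult_distrib[symmetric]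
  by (rule power_mono[OF alpha_growth[OF a n] alpha_nonneg[OF a]])

section \<open>Levels and the domain of powers of H\<close>

definition lev :: "(nat \<Rightarrow> real) \<Rightarrow> (nat \<Rightarrow> 'a::complex_inner) \<Rightarrow> nat \<Rightarrow> 'a \<Rightarrow> bool" where
  "lev \<alpha> f j x \<longleftrightarrow> summable (\<lambda>n. (\<alpha> n ^ j * cmod (cinner x (f n)))\<^sup>2)"

lemma H_iff: "(x, w) \<in> H_op \<alpha> f \<longleftrightarrow>
   summable (\<lambda>n. (cmod (complex_of_real (\<alpha> n) * cinner x (f n)))\<^sup>2) \<and>
   w = (\<Sum>n. (complex_of_real (\<alpha> n) * cinner x (f n)) *\<^sub>C f n)"
  by (simp add: H_op_def ser_op_iff)

lemma H_dom_lev1: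
  assumes a: "alpha_ok \<alpha> r"
  shows "x \<in> Domain (H_op \<alpha> f) \<longleftrightarrow> lev \<alpha> f 1 x"
proof -
  have "(\<lambda>n. (cmod (complex_of_real (\<alpha> n) * cinner x (f n)))\<^sup>2) = (\<lambda>n. (\<alpha> n ^ 1 * cmod (cinner x (f n)))\<^sup>2)"
    using alpha_nonneg[OF a] by (simp add: norm_mult)
  then show ?thesis by (auto simp: H_iff lev_def)
qed

lemma H_coef:
  fixes f :: "nat \<Rightarrow> 'a::chilbert_space"
  assumes f: "orthonormal f" and xw: "(x, w) \<in> H_op \<alpha> f"
  shows "cinner w (f m) = complex_of_real (\<alpha> m) * cinner x (f m)"
  using xw ortho_coeff[OF f, of "\<lambda>n. complex_of_real (\<alpha> n) * cinner x (f n)" m]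
  by (simp add: H_iff)

lemma H_lev_shift:
  fixes f :: "nat \<Rightarrow> 'a::chilbert_space"
  assumes a: "alpha_ok \<alpha> r" and f: "orthonormal f" and xw: "(x, w) \<in> H_op \<alpha> f"
  shows "lev \<alpha> f j w \<longleftrightarrow> lev \<alpha> f (Suc j) x"
proof -
  have "(\<lambda>n. (\<alpha> n ^ j * cmod (cinner w (f n)))\<^sup>2) = (\<lambda>n. (\<alpha> n ^ Suc j * cmod (cinner x (f n)))\<^sup>2)"
    using alpha_nonneg[OF a] H_coef[OF f xw] by (simp add: norm_mult mult_ac)
  then show ?thesis by (simp add: lev_def)
qed

lemma H_functional: "(x, w) \<in> H_op \<alpha> f \<Longrightarrow> (x, w') \<in> H_op \<alpha> f \<Longrightarrow> w = w'"
  by (simp add: H_iff)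

lemma H_pow_dom:
  fixes f :: "nat \<Rightarrow> 'a::chilbert_space"
  assumes a: "alpha_ok \<alpha> r" and f: "orthonormal f"
  shows "x \<in> Domain (H_op \<alpha> f ^^ k) \<longleftrightarrow> (\<forall>j\<in>{1..k}. lev \<alpha> f j x)"
proof (induction k arbitrary: x)
  case 0 then show ?case by simp
next
  case (Suc k)
  have "x \<in> Domain (H_op \<alpha> f ^^ Suc k) \<longleftrightarrow> (\<exists>w. (x, w) \<in> H_op \<alpha> f \<and> w \<in> Domain (H_op \<alpha> f ^^ k))"
  proof
    assume "x \<in> Domain (H_op \<alpha> f ^^ Suc k)"
    then obtain z where "(x, z) \<in> H_op \<alpha> f ^^ Suc k" by (rule DomainE)
    then show "\<exists>w. (x, w) \<in> H_op \<alpha> f \<and> w \<in> Domain (H_op \<alpha> f ^^ k)"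
      by (rule relpow_Suc_E2) (rule exI, rule conjI, assumption, rule DomainI)
  next
    assume "\<exists>w. (x, w) \<in> H_op \<alpha> f \<and> w \<in> Domain (H_op \<alpha> f ^^ k)"
    then obtain w b where "(x, w) \<in> H_op \<alpha> f" "(w, b) \<in> H_op \<alpha> f ^^ k" by blast
    then have "(x, b) \<in> H_op \<alpha> f ^^ Suc k" by (rule relpow_Suc_I2)
    then show "x \<in> Domain (H_op \<alpha> f ^^ Suc k)" by (rule DomainI)
  qed
  also have "\<dots> \<longleftrightarrow> lev \<alpha> f 1 x \<and> (\<forall>j\<in>{1..k}. lev \<alpha> f (Suc j) x)"
  proof
    assume "\<exists>w. (x, w) \<in> H_op \<alpha> f \<and> w \<in> Domain (H_op \<alpha> f ^^ k)"
    then obtain w where xw: "(x, w) \<in> H_op \<alpha> f" and "w \<in> Domain (H_op \<alpha> f ^^ k)" by blast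
    then show "lev \<alpha> f 1 x \<and> (\<forall>j\<in>{1..k}. lev \<alpha> f (Suc j) x)"
      using Suc.IH H_lev_shift[OF a f xw] H_dom_lev1[OF a, of x f] by blast
  next
    assume h: "lev \<alpha> f 1 x \<and> (\<forall>j\<in>{1..k}. lev \<alpha> f (Suc j) x)"
    then obtain w where xw: "(x, w) \<in> H_op \<alpha> f" using H_dom_lev1[OF a, of x f] by blast
    then show "\<exists>w. (x, w) \<in> H_op \<alpha> f \<and> w \<in> Domain (H_op \<alpha> f ^^ k)"
      using Suc.IH H_lev_shift[OF a f xw] h by blast
  qed
  also have "\<dots> \<longleftrightarrow> (\<forall>j\<in>{1..Suc k}. lev \<alpha> f j x)"
  proof
    assume h: "lev \<alpha> f 1 x \<and> (\<forall>j\<in>{1..k}. lev \<alpha> f (Suc j) x)"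
    show "\<forall>j\<in>{1..Suc k}. lev \<alpha> f j x"
    proof
      fix j assume j: "j \<in> {1..Suc k}"
      show "lev \<alpha> f j x"
      proof (cases "j = 1")
        case True then show ?thesis using h by simp
      next
        case False
        then obtain i where "j = Suc i" "i \<in> {1..k}" using j by (cases j) auto
        then show ?thesis using h by simp
      qed
    qed
  next
    assume h: "\<forall>j\<in>{1..Suc k}. lev \<alpha> f j x"
    then show "lev \<alpha> f 1 x \<and> (\<forall>j\<in>{1..k}. lev \<alpha> f (Suc j) x)" by auto
  qed
  finally show ?case .
qed

lemma Dinf_iff:
  fixes f :: "nat \<Rightarrow> 'a::chilbert_space"
  assumes a: "alpha_ok \<alpha> r" and f: "orthonormal f"
  shows "x \<in> Dinf (H_op \<alpha> f) \<longleftrightarrow> (\<forall>j\<ge>1. lev \<alpha> f j x)"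
proof -
  have "x \<in> Dinf (H_op \<alpha> f) \<longleftrightarrow> (\<forall>n\<in>{1..}. \<forall>j\<in>{1..n}. lev \<alpha> f j x)"
    unfolding Dinf_def by (simp only: INT_iff H_pow_dom[OF a f])
  also have "\<dots> \<longleftrightarrow> (\<forall>j\<ge>1. lev \<alpha> f j x)"
  proof
    assume h: "\<forall>n\<in>{1..}. \<forall>j\<in>{1..n}. lev \<alpha> f j x"
    show "\<forall>j\<ge>1. lev \<alpha> f j x"
    proof (intro allI impI)
      fix j :: nat assume j: "j \<ge> 1"
      then have "j \<in> {1..}" "j \<in> {1..j}" by auto
      then show "lev \<alpha> f j x" using h by blast
    qed
  next
    assume h: "\<forall>j\<ge>1. lev \<alpha> f j x"
    show "\<forall>n\<in>{1..}. \<forall>j\<in>{1..n}. lev \<alpha> f j x"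
    proof (intro ballI)
      fix n j :: nat assume "j \<in> {1..n}"
      then have "j \<ge> 1" by simp
      then show "lev \<alpha> f j x" using h by blast
    qed
  qed
  finally show ?thesis .
qed


section \<open>Invariance of D^infinity\<close>

lemma Dinf_H:
  fixes f :: "nat \<Rightarrow> 'a::chilbert_space"
  assumes a: "alpha_ok \<alpha> r" and f: "orthonormal f" and x: "x \<in> Dinf (H_op \<alpha> f)"
  shows "x \<in> Domain (H_op \<alpha> f) \<and> (\<forall>w. (x, w) \<in> H_op \<alpha> f \<longrightarrow> w \<in> Dinf (H_op \<alpha> f))"
proof -
  have l: "\<forall>j\<ge>1. lev \<alpha> f j x" using x Dinf_iff[OF a f] by blast
  then have "x \<in> Domain (H_op \<alpha> f)" using H_dom_lev1[OF a] by blast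
  moreover have "w \<in> Dinf (H_op \<alpha> f)" if xw: "(x, w) \<in> H_op \<alpha> f" for w
    unfolding Dinf_iff[OF a f] using l H_lev_shift[OF a f xw] by simp
  ultimately show ?thesis by blast
qed

lemma A_iff: "(x, w) \<in> A_op \<alpha> f \<longleftrightarrow>
   summable (\<lambda>n. (cmod (complex_of_real (\<alpha> (Suc n)) * cinner x (f (Suc n))))\<^sup>2) \<and>
   w = (\<Sum>n. (complex_of_real (\<alpha> (Suc n)) * cinner x (f (Suc n))) *\<^sub>C f n)"
  by (simp add: A_op_def ser_op_iff)

lemma B_iff: "(x, w) \<in> B_op \<alpha> f \<longleftrightarrow>
   summable (\<lambda>n. (cmod (complex_of_real (\<alpha> (Suc n)) * cinner x (f n)))\<^sup>2) \<and>
   w = (\<Sum>n. (complex_of_real (\<alpha> (Suc n)) * cinner x (f n)) *\<^sub>C f (Suc n))"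
  by (simp add: B_op_def ser_op_iff)

lemma cmod_ofreal_mult: "0 \<le> a \<Longrightarrow> cmod (complex_of_real a * z) = a * cmod z"
  by (simp add: norm_mult)

lemma Dinf_A:
  fixes f :: "nat \<Rightarrow> 'a::chilbert_space"
  assumes a: "alpha_ok \<alpha> r" and f: "orthonormal f" and x: "x \<in> Dinf (H_op \<alpha> f)"
  shows "x \<in> Domain (A_op \<alpha> f) \<and> (\<forall>w. (x, w) \<in> A_op \<alpha> f \<longrightarrow> w \<in> Dinf (H_op \<alpha> f))"
proof -
  note nn = alpha_nonneg[OF a]
  have l: "\<And>j. j \<ge> 1 \<Longrightarrow> summable (\<lambda>n. (\<alpha> (Suc n) ^ j * cmod (cinner x (f (Suc n))))\<^sup>2)"
    using x Dinf_iff[OF a f] unfolding lev_def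
    by (subst summable_Suc_iff[where f="\<lambda>n. (\<alpha> n ^ _ * cmod (cinner x (f n)))\<^sup>2"]) blast
  have s: "summable (\<lambda>n. (cmod (complex_of_real (\<alpha> (Suc n)) * cinner x (f (Suc n))))\<^sup>2)"
    using l[of 1] by (simp add: cmod_ofreal_mult nn)
  then have "x \<in> Domain (A_op \<alpha> f)" by (auto simp: A_iff)
  moreover have "w \<in> Dinf (H_op \<alpha> f)" if xw: "(x, w) \<in> A_op \<alpha> f" for w
  proof -
    have co: "cinner w (f m) = complex_of_real (\<alpha> (Suc m)) * cinner x (f (Suc m))" for m
      using xw ortho_coeff[OF f s, of m] by (simp add: A_iff)
    have "lev \<alpha> f j w" if j: "j \<ge> 1" for j
      unfolding lev_def
    proof (rule summable_comparison_test'[OF l[of "Suc j"]])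
      fix n :: nat
      have "\<alpha> n ^ j * (\<alpha> (Suc n) * cmod (cinner x (f (Suc n))))
            \<le> \<alpha> (Suc n) ^ j * (\<alpha> (Suc n) * cmod (cinner x (f (Suc n))))"
        by (intro mult_right_mono power_mono alpha_mono[OF a] nn mult_nonneg_nonneg norm_ge_zero)
      then have "(\<alpha> n ^ j * (\<alpha> (Suc n) * cmod (cinner x (f (Suc n)))))\<^sup>2
            \<le> (\<alpha> (Suc n) ^ Suc j * cmod (cinner x (f (Suc n))))\<^sup>2"
        by (intro power_mono) (auto simp: mult_ac nn)
      then show "norm ((\<alpha> n ^ j * cmod (cinner w (f n)))\<^sup>2)
            \<le> (\<alpha> (Suc n) ^ Suc j * cmod (cinner x (f (Suc n))))\<^sup>2"
        by (simp add: co cmod_ofreal_mult nn)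
    qed simp
    then show ?thesis using Dinf_iff[OF a f] by blast
  qed
  ultimately show ?thesis by blast
qed

lemma B_coef:
  fixes f :: "nat \<Rightarrow> 'a::chilbert_space"
  assumes f: "orthonormal f" and s: "summable (\<lambda>n. (cmod (d n))\<^sup>2)"
  shows "cinner (\<Sum>n. d n *\<^sub>C f (Suc n)) (f m) = (case m of 0 \<Rightarrow> 0 | Suc k \<Rightarrow> d k)"
proof -
  have S: "(\<lambda>n. d n * cinner (f (Suc n)) (f m)) sums cinner (\<Sum>n. d n *\<^sub>C f (Suc n)) (f m)"
    using ortho_cinner_sums[OF orthonormal_Suc[OF f] s] .
  show ?thesis
  proof (cases m)
    case 0
    then have "(\<lambda>n. d n * cinner (f (Suc n)) (f m)) = (\<lambda>n. 0)"
      using f by (auto simp: orthonormal_def)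
    then have "(\<lambda>n. 0::complex) sums cinner (\<Sum>n. d n *\<^sub>C f (Suc n)) (f m)"
      using S by (simp only:)
    then have "cinner (\<Sum>n. d n *\<^sub>C f (Suc n)) (f m) = 0" using sums_zero sums_unique2 by blast
    then show ?thesis using 0 by simp
  next
    case (Suc k)
    then have "(\<lambda>n. d n * cinner (f (Suc n)) (f m)) = (\<lambda>n. if n = k then d n else 0)"
      using f by (auto simp: orthonormal_def)
    then have "(\<lambda>n. if n = k then d n else 0) sums cinner (\<Sum>n. d n *\<^sub>C f (Suc n)) (f m)"
      using S by (simp only:)
    then have "cinner (\<Sum>n. d n *\<^sub>C f (Suc n)) (f m) = d k" using sums_single[of k d] sums_unique2 by blast
    then show ?thesis using Suc by simp
  qed
qed

lemma Dinf_B: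
  fixes f :: "nat \<Rightarrow> 'a::chilbert_space"
  assumes a: "alpha_ok \<alpha> r" and f: "orthonormal f" and x: "x \<in> Dinf (H_op \<alpha> f)"
  shows "x \<in> Domain (B_op \<alpha> f) \<and> (\<forall>w. (x, w) \<in> B_op \<alpha> f \<longrightarrow> w \<in> Dinf (H_op \<alpha> f))"
proof -
  note nn = alpha_nonneg[OF a]
  define K where "K = 1 + r / \<alpha> 1"
  have K: "K \<ge> 0" using alpha1_pos[OF a] a by (simp add: K_def alpha_ok_def)
  have l: "\<And>j. j \<ge> 1 \<Longrightarrow> summable (\<lambda>n. (\<alpha> n ^ j * cmod (cinner x (f n)))\<^sup>2)"
    using x Dinf_iff[OF a f] unfolding lev_def by blast
  have bound: "(\<alpha> (Suc n) ^ k * cmod (cinner x (f n)))\<^sup>2 \<le> (K ^ k)\<^sup>2 * (\<alpha> n ^ k * cmod (cinner x (f n)))\<^sup>2"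
    if n: "n \<ge> 1" for n k
  proof -
    have "\<alpha> (Suc n) ^ k * cmod (cinner x (f n)) \<le> K ^ k * \<alpha> n ^ k * cmod (cinner x (f n))"
      using alpha_growth_pow[OF a n, of k] unfolding K_def[symmetric]
      by (intro mult_right_mono) auto
    then have "(\<alpha> (Suc n) ^ k * cmod (cinner x (f n)))\<^sup>2 \<le> (K ^ k * \<alpha> n ^ k * cmod (cinner x (f n)))\<^sup>2"
      by (intro power_mono) (auto simp: nn)
    then show ?thesis by (simp add: power_mult_distrib mult_ac)
  qed
  have s: "summable (\<lambda>n. (cmod (complex_of_real (\<alpha> (Suc n)) * cinner x (f n)))\<^sup>2)"
  proof (rule summable_comparison_test'[OF summable_mult[OF l[of 1], of "(K ^ 1)\<^sup>2"]])
    fix n :: nat assume "n \<ge> 1"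
    then show "norm ((cmod (complex_of_real (\<alpha> (Suc n)) * cinner x (f n)))\<^sup>2)
        \<le> (K ^ 1)\<^sup>2 * (\<alpha> n ^ 1 * cmod (cinner x (f n)))\<^sup>2"
      using bound[of n 1] by (simp add: cmod_ofreal_mult nn)
  qed simp
  then have "x \<in> Domain (B_op \<alpha> f)" by (auto simp: B_iff)
  moreover have "w \<in> Dinf (H_op \<alpha> f)" if xw: "(x, w) \<in> B_op \<alpha> f" for w
  proof -
    have co: "cinner w (f m) = (case m of 0 \<Rightarrow> 0 | Suc k \<Rightarrow> complex_of_real (\<alpha> (Suc k)) * cinner x (f k))" for m
      using xw B_coef[OF f s, of m] by (simp add: B_iff)
    have "lev \<alpha> f j w" if j: "j \<ge> 1" for j
      unfolding lev_def
    proof (subst summable_Suc_iff[symmetric])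
      show "summable (\<lambda>n. (\<alpha> (Suc n) ^ j * cmod (cinner w (f (Suc n))))\<^sup>2)"
      proof (rule summable_comparison_test'[OF summable_mult[OF l[of "Suc j"], of "(K ^ Suc j)\<^sup>2"]])
        fix n :: nat assume n1: "n \<ge> 1"
        have eq: "norm ((\<alpha> (Suc n) ^ j * cmod (cinner w (f (Suc n))))\<^sup>2)
            = (\<alpha> (Suc n) ^ Suc j * cmod (cinner x (f n)))\<^sup>2"
          by (simp add: co norm_mult nn abs_of_nonneg mult_ac)
        show "norm ((\<alpha> (Suc n) ^ j * cmod (cinner w (f (Suc n))))\<^sup>2)
            \<le> (K ^ Suc j)\<^sup>2 * (\<alpha> n ^ Suc j * cmod (cinner x (f n)))\<^sup>2"
          unfolding eq by (rule bound[OF n1])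
      qed simp
    qed
    then show ?thesis using Dinf_iff[OF a f] by blast
  qed
  ultimately show ?thesis by blast
qed

lemma sq_add_bound:
  fixes a :: real and p q :: complex
  assumes "0 \<le> a"
  shows "(a * cmod (p + q))\<^sup>2 \<le> 2 * (a * cmod p)\<^sup>2 + 2 * (a * cmod q)\<^sup>2"
proof -
  have "a * cmod (p + q) \<le> a * cmod p + a * cmod q"
    using assms by (metis distrib_left mult_left_mono norm_triangle_ineq)
  then have "(a * cmod (p + q))\<^sup>2 \<le> (a * cmod p + a * cmod q)\<^sup>2"
    using assms by (intro power_mono) auto
  also have "\<dots> \<le> 2 * (a * cmod p)\<^sup>2 + 2 * (a * cmod q)\<^sup>2"
  proof -
    have "0 \<le> (a * cmod p - a * cmod q)\<^sup>2" by simp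
    then show ?thesis by (simp add: power2_eq_square algebra_simps)
  qed
  finally show ?thesis .
qed

lemma Dinf_add:
  fixes f :: "nat \<Rightarrow> 'a::chilbert_space"
  assumes a: "alpha_ok \<alpha> r" and f: "orthonormal f"
    and x: "x \<in> Dinf (H_op \<alpha> f)" and u: "u \<in> Dinf (H_op \<alpha> f)"
  shows "x + u \<in> Dinf (H_op \<alpha> f)"
proof -
  have "lev \<alpha> f j (x + u)" if j: "j \<ge> 1" for j
  proof -
    have lx: "summable (\<lambda>n. (\<alpha> n ^ j * cmod (cinner x (f n)))\<^sup>2)"
      and lu: "summable (\<lambda>n. (\<alpha> n ^ j * cmod (cinner u (f n)))\<^sup>2)"
      using x u j Dinf_iff[OF a f] unfolding lev_def by blast+
    show ?thesis unfolding lev_def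
    proof (rule summable_comparison_test'[OF summable_add[OF summable_mult[OF lx, of 2] summable_mult[OF lu, of 2]]])
      fix n :: nat
      show "norm ((\<alpha> n ^ j * cmod (cinner (x + u) (f n)))\<^sup>2)
          \<le> 2 * (\<alpha> n ^ j * cmod (cinner x (f n)))\<^sup>2 + 2 * (\<alpha> n ^ j * cmod (cinner u (f n)))\<^sup>2"
        using sq_add_bound[of "\<alpha> n ^ j" "cinner x (f n)" "cinner u (f n)"] alpha_nonneg[OF a]
        by (simp add: cinner_add_left)
    qed
  qed
  then show ?thesis using Dinf_iff[OF a f] by blast
qed

lemma Dinf_scale:
  fixes f :: "nat \<Rightarrow> 'a::chilbert_space"
  assumes a: "alpha_ok \<alpha> r" and f: "orthonormal f" and x: "x \<in> Dinf (H_op \<alpha> f)"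
  shows "c *\<^sub>C x \<in> Dinf (H_op \<alpha> f)"
proof -
  have "lev \<alpha> f j (c *\<^sub>C x)" if j: "j \<ge> 1" for j
  proof -
    have lx: "summable (\<lambda>n. (\<alpha> n ^ j * cmod (cinner x (f n)))\<^sup>2)"
      using x j Dinf_iff[OF a f] unfolding lev_def by blast
    have "(\<lambda>n. (\<alpha> n ^ j * cmod (cinner (c *\<^sub>C x) (f n)))\<^sup>2)
        = (\<lambda>n. (cmod c)\<^sup>2 * (\<alpha> n ^ j * cmod (cinner x (f n)))\<^sup>2)"
      by (simp add: cinner_scaleC_left norm_mult power_mult_distrib mult_ac)
    then show ?thesis unfolding lev_def by (simp only: summable_mult[OF lx])
  qed
  then show ?thesis using Dinf_iff[OF a f] by blast
qed

lemma Dinf_zero: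
  fixes f :: "nat \<Rightarrow> 'a::chilbert_space"
  assumes a: "alpha_ok \<alpha> r" and f: "orthonormal f"
  shows "0 \<in> Dinf (H_op \<alpha> f)"
  using Dinf_iff[OF a f] by (simp add: lev_def)

lemma Dinf_basis:
  fixes f :: "nat \<Rightarrow> 'a::chilbert_space"
  assumes a: "alpha_ok \<alpha> r" and f: "orthonormal f"
  shows "f k \<in> Dinf (H_op \<alpha> f)"
proof -
  have "lev \<alpha> f j (f k)" for j
  proof -
    have "(\<lambda>n. (\<alpha> n ^ j * cmod (cinner (f k) (f n)))\<^sup>2) = (\<lambda>n. if n = k then (\<alpha> n ^ j)\<^sup>2 else 0)"
      using f by (auto simp: orthonormal_def)
    then show ?thesis unfolding lev_def using sums_single[of k "\<lambda>n. (\<alpha> n ^ j)\<^sup>2"]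
      by (simp add: sums_summable)
  qed
  then show ?thesis using Dinf_iff[OF a f] by blast
qed

lemma Dinf_span:
  fixes f :: "nat \<Rightarrow> 'a::chilbert_space"
  assumes a: "alpha_ok \<alpha> r" and f: "orthonormal f"
  shows "cspan (range f) \<subseteq> Dinf (H_op \<alpha> f)"
proof
  fix x assume "x \<in> cspan (range f)"
  then obtain F c where F: "finite F" "F \<subseteq> range f" and x: "x = (\<Sum>v\<in>F. c v *\<^sub>C v)"
    unfolding cspan_def by blast
  have "F \<subseteq> range f \<longrightarrow> (\<Sum>v\<in>F. c v *\<^sub>C v) \<in> Dinf (H_op \<alpha> f)"
    using F(1)
  proof (induction F rule: finite_induct)
    case empty then show ?case using Dinf_zero[OF a f] by simp
  next
    case (insert v F)
    show ?case
    proof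
      assume "insert v F \<subseteq> range f"
      then have "v \<in> range f" "F \<subseteq> range f" by auto
      then show "(\<Sum>v\<in>insert v F. c v *\<^sub>C v) \<in> Dinf (H_op \<alpha> f)"
        using insert Dinf_add[OF a f] Dinf_scale[OF a f] Dinf_basis[OF a f] by auto
    qed
  qed
  then show "x \<in> Dinf (H_op \<alpha> f)" using F x by blast
qed


section \<open>Closures of linear graphs\<close>

lemma closure_add_closed:
  fixes R :: "'b::real_normed_vector set"
  assumes R: "\<forall>p\<in>R. \<forall>q\<in>R. p + q \<in> R" and p: "p \<in> closure R" and q: "q \<in> closure R"
  shows "p + q \<in> closure R"
proof -
  have "(\<lambda>z. fst z + snd z) ` closure (R \<times> R) \<subseteq> closure ((\<lambda>z. fst z + snd z) ` (R \<times> R))"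
    by (rule continuous_image_closure_subset[where A=UNIV]) (auto intro!: continuous_intros)
  also have "\<dots> \<subseteq> closure R" using R by (intro closure_mono) auto
  finally have sub: "(\<lambda>z. fst z + snd z) ` closure (R \<times> R) \<subseteq> closure R" .
  have "(p, q) \<in> closure (R \<times> R)" by (simp add: closure_Times p q)
  then have "(\<lambda>z. fst z + snd z) (p, q) \<in> closure R" using sub by blast
  then show ?thesis by simp
qed

lemma closure_map_closed:
  fixes R :: "'b::topological_space set"
  assumes g: "continuous_on UNIV g" and R: "\<forall>p\<in>R. g p \<in> R" and p: "p \<in> closure R"
  shows "g p \<in> closure R"
proof -
  have "g ` closure R \<subseteq> closure (g ` R)"
    by (rule continuous_image_closure_subset[OF g]) simp
  also have "\<dots> \<subseteq> closure R" using R by (intro closure_mono) auto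
  finally show ?thesis using p by blast
qed

lemma cont_scale_pair: "continuous_on UNIV (\<lambda>z::'a::complex_inner \<times> 'a. (c *\<^sub>C fst z, c *\<^sub>C snd z))"
  by (intro linear_continuous_on bounded_linear_Pair
      bounded_linear_compose[OF bounded_linear_scaleC bounded_linear_fst]
      bounded_linear_compose[OF bounded_linear_scaleC bounded_linear_snd])

lemma in_L_conj:
  assumes inj: "\<And>x z y. (x, y) \<in> T0 \<Longrightarrow> (z, y) \<in> T0 \<Longrightarrow> x = z"
    and dom: "D \<subseteq> Domain T0"
    and X: "\<And>x. x \<in> D \<Longrightarrow> x \<in> Domain X \<and> (\<forall>w. (x, w) \<in> X \<longrightarrow> w \<in> D)"
  shows "in_L (op_comp3 T0 X (op_inv T0)) (T0 `` D)"
  unfolding in_L_def op_comp3_def op_inv_def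
proof
  show "T0 `` D \<subseteq> Domain (T0\<inverse> O X O T0)"
  proof
    fix y assume "y \<in> T0 `` D"
    then obtain x where x: "x \<in> D" "(x, y) \<in> T0" by blast
    then obtain w where w: "(x, w) \<in> X" using X by blast
    then have "w \<in> D" using X x by blast
    then obtain z where "(w, z) \<in> T0" using dom by blast
    then show "y \<in> Domain (T0\<inverse> O X O T0)" using x w by blast
  qed
  show "(T0\<inverse> O X O T0) `` (T0 `` D) \<subseteq> T0 `` D"
  proof
    fix z assume "z \<in> (T0\<inverse> O X O T0) `` (T0 `` D)"
    then obtain y x x' w where x: "x \<in> D" "(x, y) \<in> T0" and x': "(x', y) \<in> T0"
      and w: "(x', w) \<in> X" and z: "(w, z) \<in> T0" by blast
    have "x' = x" using inj x' x by blast
    then have "w \<in> D" using X x w by blast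
    then show "z \<in> T0 `` D" using z by blast
  qed
qed

lemma T_iff: "(x, w) \<in> T_op f \<phi> \<longleftrightarrow> x \<in> seq_dom \<phi> \<and> w = (\<Sum>n. cinner x (\<phi> n) *\<^sub>C f n)"
  by (simp add: T_op_def ser_op_iff seq_dom_def)

lemma adjoint_antimono: "A \<subseteq> B \<Longrightarrow> adjoint B \<subseteq> adjoint A"
  unfolding adjoint_def by blast

lemma part:
  fixes \<phi> f :: "nat \<Rightarrow> 'a::chilbert_space" and D :: "'a set"
  assumes Dsub: "D \<subseteq> seq_dom \<phi>"
    and cp: "constructing_pair f (op_closure (op_restrict (T_op f \<phi>) D)) \<phi>"
    and a: "alpha_ok \<alpha> r"
    and hyp: "Dinf (H_op \<alpha> f) \<subseteq> D \<and> dense_set (T_op f \<phi> `` Dinf (H_op \<alpha> f))"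
  shows "let T0 = op_closure (op_restrict (T_op f \<phi>) (Dinf (H_op \<alpha> f)));
            D0 = T0 `` Dinf (H_op \<alpha> f)
        in constructing_pair f T0 \<phi>
           \<and> in_L (op_comp3 T0 (H_op \<alpha> f) (op_inv T0)) D0
           \<and> in_L (op_comp3 T0 (A_op \<alpha> f) (op_inv T0)) D0
           \<and> in_L (op_comp3 T0 (B_op \<alpha> f) (op_inv T0)) D0"
proof -
  define Dn where "Dn = Dinf (H_op \<alpha> f)"
  define R where "R = op_restrict (T_op f \<phi>) Dn"
  define T0 where "T0 = op_closure R"
  define S where "S = op_closure (op_restrict (T_op f \<phi>) D)"
  have onb: "is_onb f" using cp by (simp add: constructing_pair_def)
  have f: "orthonormal f" using onb_orthonormal[OF onb] .
  have DnD: "Dn \<subseteq> D" using hyp by (simp add: Dn_def)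
  have Dn_seq: "Dn \<subseteq> seq_dom \<phi>" using DnD Dsub by blast
  have R_iff: "(x, w) \<in> R \<longleftrightarrow> x \<in> Dn \<and> w = (\<Sum>n. cinner x (\<phi> n) *\<^sub>C f n)" for x w
    using Dn_seq by (auto simp: R_def op_restrict_def T_iff)
  have summ: "summable (\<lambda>n. cinner x (\<phi> n) *\<^sub>C f n)" if "x \<in> Dn" for x
    using that Dn_seq ortho_summable[OF f] by (auto simp: seq_dom_def)
  have RT0: "R \<subseteq> T0" by (simp add: T0_def op_closure_def closure_subset)
  have T0S: "T0 \<subseteq> S"
    unfolding T0_def S_def op_closure_def R_def
    by (rule closure_mono) (use DnD in \<open>auto simp: op_restrict_def\<close>)
  have linS: "lin_op S" and invS: "lin_op (op_inv S)"
    using cp by (simp_all add: constructing_pair_def closed_op_def S_def)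
  have Sfun: "\<And>x y z. (x, y) \<in> S \<Longrightarrow> (x, z) \<in> S \<Longrightarrow> y = z"
    using linS by (simp add: lin_op_def)
  have Sinj: "\<And>x y z. (x, y) \<in> S \<Longrightarrow> (z, y) \<in> S \<Longrightarrow> x = z"
    using invS by (simp add: lin_op_def op_inv_def)
  have T0inj: "\<And>x y z. (x, y) \<in> T0 \<Longrightarrow> (z, y) \<in> T0 \<Longrightarrow> x = z"
    using Sinj T0S by blast
  have R_add: "p + q \<in> R" if "p \<in> R" "q \<in> R" for p q
  proof -
    obtain x y where p: "p = (x, y)" by force
    obtain u v where q: "q = (u, v)" by force
    have x: "x \<in> Dn" and y: "y = (\<Sum>n. cinner x (\<phi> n) *\<^sub>C f n)" using that(1) p R_iff by auto
    have u: "u \<in> Dn" and v: "v = (\<Sum>n. cinner u (\<phi> n) *\<^sub>C f n)" using that(2) q R_iff by auto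
    have xu: "x + u \<in> Dn" using Dinf_add[OF a f] x u by (simp add: Dn_def)
    have "(\<Sum>n. cinner (x + u) (\<phi> n) *\<^sub>C f n) = (\<Sum>n. cinner x (\<phi> n) *\<^sub>C f n + cinner u (\<phi> n) *\<^sub>C f n)"
      by (simp add: cinner_add_left scaleC_add_left)
    also have "\<dots> = y + v" unfolding y v by (rule suminf_add[OF summ[OF x] summ[OF u], symmetric])
    finally show ?thesis using xu p q R_iff by simp
  qed
  have R_scale: "(c *\<^sub>C fst p, c *\<^sub>C snd p) \<in> R" if "p \<in> R" for p c
  proof -
    obtain x y where p: "p = (x, y)" by force
    have x: "x \<in> Dn" and y: "y = (\<Sum>n. cinner x (\<phi> n) *\<^sub>C f n)" using that p R_iff by auto
    have cx: "c *\<^sub>C x \<in> Dn" using Dinf_scale[OF a f] x by (simp add: Dn_def)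
    have "(\<Sum>n. cinner (c *\<^sub>C x) (\<phi> n) *\<^sub>C f n) = (\<Sum>n. c *\<^sub>C (cinner x (\<phi> n) *\<^sub>C f n))"
      by (simp add: cinner_scaleC_left scaleC_scaleC)
    also have "\<dots> = c *\<^sub>C y"
      unfolding y by (rule bounded_linear.suminf[OF bounded_linear_scaleC summ[OF x], symmetric])
    finally show ?thesis using cx p R_iff by simp
  qed
  have R_zero: "(0, 0) \<in> R"
    using Dinf_zero[OF a f] R_iff by (simp add: Dn_def)
  have linT0: "lin_op T0"
    unfolding lin_op_def
  proof (intro conjI allI impI)
    show "y = z" if "(x, y) \<in> T0" "(x, z) \<in> T0" for x y z using that T0S Sfun by blast
    show "(0, 0) \<in> T0" using R_zero RT0 by blast
    show "(x + u, y + v) \<in> T0" if "(x, y) \<in> T0" "(u, v) \<in> T0" for x y u v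
      using closure_add_closed[of R "(x, y)" "(u, v)"] R_add that by (simp add: T0_def op_closure_def)
    show "(c *\<^sub>C x, c *\<^sub>C y) \<in> T0" if "(x, y) \<in> T0" for c x y
      using closure_map_closed[OF cont_scale_pair[of c], of R "(x, y)"] R_scale that
      by (simp add: T0_def op_closure_def)
  qed
  have closedT0: "closed_op T0"
    using linT0 by (simp add: closed_op_def T0_def op_closure_def)
  have linInv: "lin_op (op_inv T0)"
    using linT0 T0inj unfolding lin_op_def op_inv_def by blast
  have DnDom: "Dn \<subseteq> Domain T0" using R_iff RT0 by blast
  have ddT0: "densely_defined T0"
  proof -
    have "cspan (range f) \<subseteq> Domain T0" using Dinf_span[OF a f] DnDom by (simp add: Dn_def)
    then have "closure (cspan (range f)) \<subseteq> closure (Domain T0)" by (rule closure_mono)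
    then have "UNIV \<subseteq> closure (Domain T0)" using onb unfolding is_onb_def dense_set_def by simp
    then show ?thesis unfolding densely_defined_def dense_set_def by blast
  qed
  have ddInv: "densely_defined (op_inv T0)"
  proof -
    have "T_op f \<phi> `` Dn \<subseteq> Domain (op_inv T0)"
      using RT0 by (auto simp: op_inv_def R_def op_restrict_def)
    then have "closure (T_op f \<phi> `` Dn) \<subseteq> closure (Domain (op_inv T0))" by (rule closure_mono)
    then have "UNIV \<subseteq> closure (Domain (op_inv T0))" using hyp by (simp add: dense_set_def Dn_def)
    then show ?thesis unfolding densely_defined_def dense_set_def by blast
  qed
  have fn: "f n \<in> Domain T0 \<and> f n \<in> Domain (adjoint (op_inv T0)) \<and> (f n, \<phi> n) \<in> T0" for n
  proof -
    have fD: "f n \<in> Domain T0" using Dinf_basis[OF a f] DnDom by (auto simp: Dn_def)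
    have cpn: "f n \<in> Domain (adjoint (op_inv S))" "(f n, \<phi> n) \<in> S"
      using cp by (simp_all add: constructing_pair_def S_def)
    have "op_inv T0 \<subseteq> op_inv S" using T0S by (auto simp: op_inv_def)
    then have "adjoint (op_inv S) \<subseteq> adjoint (op_inv T0)" by (rule adjoint_antimono)
    then have adj: "f n \<in> Domain (adjoint (op_inv T0))" using cpn by blast
    from fD obtain y where y: "(f n, y) \<in> T0" by blast
    then have "y = \<phi> n" using T0S Sfun cpn by blast
    then show ?thesis using fD adj y by simp
  qed
  have CP: "constructing_pair f T0 \<phi>"
    unfolding constructing_pair_def using onb ddT0 closedT0 linInv ddInv fn by blast
  have XH: "\<And>x. x \<in> Dn \<Longrightarrow> x \<in> Domain (H_op \<alpha> f) \<and> (\<forall>w. (x, w) \<in> H_op \<alpha> f \<longrightarrow> w \<in> Dn)"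
    unfolding Dn_def by (rule Dinf_H[OF a f])
  have LH: "in_L (op_comp3 T0 (H_op \<alpha> f) (op_inv T0)) (T0 `` Dn)"
    by (rule in_L_conj[OF T0inj DnDom XH])
  have XA: "\<And>x. x \<in> Dn \<Longrightarrow> x \<in> Domain (A_op \<alpha> f) \<and> (\<forall>w. (x, w) \<in> A_op \<alpha> f \<longrightarrow> w \<in> Dn)"
    unfolding Dn_def by (rule Dinf_A[OF a f])
  have LA: "in_L (op_comp3 T0 (A_op \<alpha> f) (op_inv T0)) (T0 `` Dn)"
    by (rule in_L_conj[OF T0inj DnDom XA])
  have XB: "\<And>x. x \<in> Dn \<Longrightarrow> x \<in> Domain (B_op \<alpha> f) \<and> (\<forall>w. (x, w) \<in> B_op \<alpha> f \<longrightarrow> w \<in> Dn)"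
    unfolding Dn_def by (rule Dinf_B[OF a f])
  have LB: "in_L (op_comp3 T0 (B_op \<alpha> f) (op_inv T0)) (T0 `` Dn)"
    by (rule in_L_conj[OF T0inj DnDom XB])
  show ?thesis using CP LH LA LB by (simp add: Let_def T0_def R_def Dn_def)
qed


theorem theorem4p7:
  fixes \<phi> \<psi> f g :: "nat \<Rightarrow> 'a::chilbert_space"
    and D E :: "'a set"
    and \<alpha> :: "nat \<Rightarrow> real" and r :: real
  assumes biorth: "biorthogonal \<phi> \<psi>"
    and D_sub: "csubspace D" and D_dense: "dense_set D"
    and E_sub: "csubspace E" and E_dense: "dense_set E"
    and qb: "quasi_basis \<phi> \<psi> D E"
    and D_incl: "cspan (range \<psi>) \<subseteq> D" "D \<subseteq> seq_dom \<phi>"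
    and E_incl: "cspan (range \<phi>) \<subseteq> E" "E \<subseteq> seq_dom \<psi>"
    and f_onb: "is_onb f"
    and Tf_sa: "self_adjoint (op_closure (op_restrict (T_op f \<phi>) D))"
    and Tf_pos: "positive_op (op_closure (op_restrict (T_op f \<phi>) D))"
    and Tf_cp: "constructing_pair f (op_closure (op_restrict (T_op f \<phi>) D)) \<phi>"
    and g_onb: "is_onb g"
    and Tg_sa: "self_adjoint (op_closure (op_restrict (T_op g \<psi>) E))"
    and Tg_pos: "positive_op (op_closure (op_restrict (T_op g \<psi>) E))"
    and Tg_cp: "constructing_pair g (op_closure (op_restrict (T_op g \<psi>) E)) \<psi>"
    and r_pos: "r > 0"
    and alpha0: "0 \<le> \<alpha> 0"
    and alpha: "\<And>n. n \<ge> 1 \<Longrightarrow> \<alpha> 0 < \<alpha> n \<and> \<alpha> n < \<alpha> (Suc n) \<and> \<alpha> (Suc n) \<le> \<alpha> n + r"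
  shows
    "(Dinf (H_op \<alpha> f) \<subseteq> D \<and> dense_set (T_op f \<phi> `` Dinf (H_op \<alpha> f)) \<longrightarrow>
       (let T0 = op_closure (op_restrict (T_op f \<phi>) (Dinf (H_op \<alpha> f)));
            D0 = T0 `` Dinf (H_op \<alpha> f)
        in constructing_pair f T0 \<phi>
           \<and> in_L (op_comp3 T0 (H_op \<alpha> f) (op_inv T0)) D0
           \<and> in_L (op_comp3 T0 (A_op \<alpha> f) (op_inv T0)) D0
           \<and> in_L (op_comp3 T0 (B_op \<alpha> f) (op_inv T0)) D0))
     \<and>
     (Dinf (H_op \<alpha> g) \<subseteq> E \<and> dense_set (T_op g \<psi> `` Dinf (H_op \<alpha> g)) \<longrightarrow>
       (let T0 = op_closure (op_restrict (T_op g \<psi>) (Dinf (H_op \<alpha> g)));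
            E0 = T0 `` Dinf (H_op \<alpha> g)
        in constructing_pair g T0 \<psi>
           \<and> in_L (op_comp3 T0 (H_op \<alpha> g) (op_inv T0)) E0
           \<and> in_L (op_comp3 T0 (A_op \<alpha> g) (op_inv T0)) E0
           \<and> in_L (op_comp3 T0 (B_op \<alpha> g) (op_inv T0)) E0))"
proof -
  have a: "alpha_ok \<alpha> r" using r_pos alpha0 alpha by (simp add: alpha_ok_def)
  show ?thesis
    apply (rule conjI)
     apply (rule impI)
     apply (erule part[OF D_incl(2) Tf_cp a])
    apply (rule impI)
    apply (erule part[OF E_incl(2) Tg_cp a])
    done
qed

end
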